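(* Let $U\subseteq\mathbb{R}^d$ be equipped with the Euclidean ($\ell_2$) metric, fix $t\in\mathbb{R}^d$, and let $f:U\to V\subseteq\mathbb{R}$ be such that there is $f_0:\mathbb{R}_{\ge0}\to\mathbb{R}$ with $f(x)=f_0(\|x-t\|)$ for all $x\in U$. Let $g(x,x')=g_0(\|x-x'\|)$ be a smooth growth function. Let $x\ne t$ and suppose $(w^*,z^* )$ with $w^*\ne z^*$ satisfies $B^*(x)=\frac{|f(w^* )-f(z^* )|}{\|w^*-z^*\|\,g(x,z^* )}$. Then there is a pair $(w_L,z_L)$ of points on the line connecting $x$ and $t$ such that $\frac{|f(w_L)-f(z_L)|}{\|w_L-z_L\|\,g(x,z_L)}\ge B^*(x)$.
   Context: A smooth growth function is $g(x,x')=g_0(\|x-x'\|)$ with $g_0:\mathbb{R}_{\ge0}\to\mathbb{R}_{\ge1}$ monotonically increasing, $g_0(0)=1$, $g_0(r_1+r_2)\le g_0(r_1)g_0(r_2)$. $B^*(x)$ denotes the $g$-smooth sensitivity of $f$ at $x$, i.e. $\sup_z\frac{\mathrm{L}_{f,\Lambda}(z)}{g(x,z)}$, where $\mathrm{L}_{f,\Lambda}(z)$ is the infimum of $K$ with $|f(z)-f(w)|\le K\|z-w\|$ for all $w$ with $\|z-w\|\le\Lambda$; $f$ is understood to extend by the same formula $f_0(\|\cdot-t\|)$ to all of $\mathbb{R}^d$. *)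

theory Defs
  imports "HOL-Analysis.Analysis" "HOL-Library.Extended_Real"
begin

definition smooth_growth :: "(real \<Rightarrow> real) \<Rightarrow> bool" where
  "smooth_growth g0 \<longleftrightarrow>
     mono_on {0..} g0 \<and> (\<forall>r\<ge>0. g0 r \<ge> 1) \<and> g0 0 = 1 \<and>
     (\<forall>r1\<ge>0. \<forall>r2\<ge>0. g0 (r1 + r2) \<le> g0 r1 * g0 r2)"

definition growth :: "(real \<Rightarrow> real) \<Rightarrow> 'a::real_normed_vector \<Rightarrow> 'a \<Rightarrow> real" where
  "growth g0 x x' = g0 (norm (x - x'))"

definition local_lip :: "('a::real_normed_vector \<Rightarrow> real) \<Rightarrow> real \<Rightarrow> 'a \<Rightarrow> ereal" where
  "local_lip f \<Lambda> z = Inf {ereal K | K. \<forall>w. norm (z - w) \<le> \<Lambda> \<longrightarrow> \<bar>f z - f w\<bar> \<le> K * norm (z - w)}"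

definition smooth_sens :: "('a::real_normed_vector \<Rightarrow> real) \<Rightarrow> real \<Rightarrow> (real \<Rightarrow> real) \<Rightarrow> 'a \<Rightarrow> ereal" where
  "smooth_sens f \<Lambda> g0 x = (SUP z. local_lip f \<Lambda> z / ereal (growth g0 x z))"

end

theory Submission
  imports Defs
begin

theorem mainTheorem12:
  fixes f0 :: "real \<Rightarrow> real" and g0 :: "real \<Rightarrow> real" and \<Lambda> :: real
    and t x wS zS :: "'a::euclidean_space"
  defines "f \<equiv> (\<lambda>y. f0 (norm (y - t)))"
  assumes "\<Lambda> > 0"
    and "smooth_growth g0"
    and "x \<noteq> t"
    and "wS \<noteq> zS"
    and "smooth_sens f \<Lambda> g0 x =
           ereal (\<bar>f wS - f zS\<bar> / (norm (wS - zS) * growth g0 x zS))"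
  shows "\<exists>wL zL. (\<exists>u. wL = x + u *\<^sub>R (t - x)) \<and> (\<exists>v. zL = x + v *\<^sub>R (t - x)) \<and> wL \<noteq> zL \<and>
           ereal (\<bar>f wL - f zL\<bar> / (norm (wL - zL) * growth g0 x zL)) \<ge> smooth_sens f \<Lambda> g0 x"
proof -
  have sg: "mono_on {0..} g0" "\<And>r. r \<ge> 0 \<Longrightarrow> g0 r \<ge> 1"
    using assms(3) unfolding smooth_growth_def by auto
  define D where "D = norm (t - x)"
  have D0: "D > 0" using assms(4) unfolding D_def by auto
  define a where "a = norm (wS - t)"
  define b where "b = norm (zS - t)"
  define wL where "wL = x + (1 - a / D) *\<^sub>R (t - x)"
  define zL where "zL = x + (1 - b / D) *\<^sub>R (t - x)"
  have wLt: "wL - t = (- (a / D)) *\<^sub>R (t - x)" unfolding wL_def by (simp add: algebra_simps)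
  have zLt: "zL - t = (- (b / D)) *\<^sub>R (t - x)" unfolding zL_def by (simp add: algebra_simps)
  have zLx: "x - zL = (- (1 - b / D)) *\<^sub>R (t - x)" unfolding zL_def by (simp add: algebra_simps)
  have wz: "wL - zL = ((b - a) / D) *\<^sub>R (t - x)" unfolding wL_def zL_def
    by (simp add: algebra_simps diff_divide_distrib)
  have a0: "a \<ge> 0" "b \<ge> 0" unfolding a_def b_def by auto
  have nwL: "norm (wL - t) = a" using wLt D0 a0 unfolding D_def by simp
  have nzL: "norm (zL - t) = b" using zLt D0 a0 unfolding D_def by simp
  have nxz: "norm (x - zL) = \<bar>D - b\<bar>"
  proof -
    have "norm (x - zL) = \<bar>1 - b / D\<bar> * D" using zLx unfolding D_def by (simp add: abs_minus_commute)
    also have "\<dots> = \<bar>(1 - b / D) * D\<bar>" using D0 by (simp add: abs_mult)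
    also have "(1 - b / D) * D = D - b" using D0 by (simp add: field_simps)
    finally show ?thesis .
  qed
  have nwz: "norm (wL - zL) = \<bar>b - a\<bar>"
  proof -
    have "norm (wL - zL) = \<bar>(b - a) / D\<bar> * D" using wz unfolding D_def by simp
    also have "\<dots> = \<bar>b - a\<bar>" using D0 by simp
    finally show ?thesis .
  qed
  have fw: "f wS = f0 a" "f zS = f0 b" "f wL = f0 a" "f zL = f0 b"
    unfolding f_def a_def b_def using nwL nzL by (auto simp: a_def b_def)
  have line: "(\<exists>u. wL = x + u *\<^sub>R (t - x))" "(\<exists>v. zL = x + v *\<^sub>R (t - x))"
    unfolding wL_def zL_def by auto
  have gpos: "growth g0 x z > 0" for z
    using sg(2)[of "norm (x - z)"] unfolding growth_def by auto
  show ?thesis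
  proof (cases "a = b")
    case True
    define p where "p = x + 2 *\<^sub>R (t - x)"
    have "x \<noteq> p" unfolding p_def using assms(4) by simp
    moreover have "(\<exists>u. x = x + u *\<^sub>R (t - x))" by (rule exI[of _ 0]) simp
    moreover have "(\<exists>v. p = x + v *\<^sub>R (t - x))" unfolding p_def by auto
    moreover have "ereal (\<bar>f x - f p\<bar> / (norm (x - p) * growth g0 x p)) \<ge> smooth_sens f \<Lambda> g0 x"
      using assms(6) True fw gpos[of p] by simp
    ultimately show ?thesis by blast
  next
    case False
    have ne: "wL \<noteq> zL" using nwz False by auto
    have d1: "\<bar>b - a\<bar> \<le> norm (wS - zS)"
      unfolding a_def b_def by (metis norm_triangle_ineq3 abs_minus_commute diff_diff_eq2 diff_add_cancel abs_triangle_ineq3 norm_minus_commute add.commute)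
    have d2: "\<bar>D - b\<bar> \<le> norm (x - zS)"
    proof -
      have "\<bar>norm (x - t) - norm (zS - t)\<bar> \<le> norm ((x - t) - (zS - t))" by (rule norm_triangle_ineq3)
      then show ?thesis unfolding D_def b_def by (simp add: norm_minus_commute)
    qed
    have g: "growth g0 x zL \<le> growth g0 x zS"
      unfolding growth_def nxz using sg(1) d2 by (auto intro: mono_onD)
    have gzL: "growth g0 x zL > 0" by (rule gpos)
    have pos: "\<bar>b - a\<bar> > 0" using False by simp
    have "\<bar>f0 a - f0 b\<bar> / (norm (wS - zS) * growth g0 x zS)
          \<le> \<bar>f0 a - f0 b\<bar> / (\<bar>b - a\<bar> * growth g0 x zL)"
    proof (rule divide_left_mono)
      show "\<bar>b - a\<bar> * growth g0 x zL \<le> norm (wS - zS) * growth g0 x zS"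
        using d1 g pos gzL by (intro mult_mono) auto
      have "norm (wS - zS) > 0" using d1 pos by linarith
      moreover have "growth g0 x zS > 0" by (rule gpos)
      ultimately show "0 < norm (wS - zS) * growth g0 x zS * (\<bar>b - a\<bar> * growth g0 x zL)"
        using pos gzL by simp
    qed simp
    then have "ereal (\<bar>f wL - f zL\<bar> / (norm (wL - zL) * growth g0 x zL)) \<ge> smooth_sens f \<Lambda> g0 x"
      using assms(6) fw nwz by simp
    then show ?thesis using line ne by blast
  qed
qed

end
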